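(* Let $q\ge 2$, $u\ge 1$, $Q\ge 2$, $n\ge1$, $N\ge 1$ be integers and let $0=\eta_0<\eta_1<\cdots<\eta_Q$ be integer thresholds with $\eta_Q>(q-1)u$ and $q-1\ge\eta_1$. If $\mathbf{C}_b$ is a binary $u$-disjunct matrix of size $n\times N$, then the columns of $(q-1)\mathbf{C}_b$ form a $[q;Q;\boldsymbol{\eta};u]$-SQ-disjunct code of length $n$ and size $N$, where $\boldsymbol{\eta}=(\eta_1,\dots,\eta_Q)$. Consequently, for all $n,N$, if a binary $u$-disjunct code of length $n$ and size $N$ exists, then a $[q;Q;\boldsymbol{\eta};u]$-SQ-disjunct code of length $n$ and size $N$ exists (so the rate $\frac{\log N}{n}$ of the best $[q;Q;\boldsymbol{\eta};u]$-SQ-disjunct code is at least that of the best binary $u$-disjunct code).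
   Context: A binary $n\times N$ matrix is $u$-disjunct if for every column $\mathbf{c}$ and every set $S$ of at most $u$ columns other than $\mathbf{c}$, there is a row in which $\mathbf{c}$ has entry $1$ and every column in $S$ has entry $0$; its columns form a binary $u$-disjunct code of length $n$ and size $N$. A $q$-ary code of length $n$ is a set of distinct vectors in $\{0,1,\dots,q-1\}^n$. For a nonempty set $\mathcal{X}=\{\mathbf{x}_1,\dots,\mathbf{x}_s\}$ of at most $u$ codewords, its syndrome is the vector $\mathbf{y}_{\mathcal{X}}\in\{0,\dots,Q-1\}^n$ whose $k$-th coordinate equals the unique $r\in\{0,\dots,Q-1\}$ with $\eta_r\le\sum_{j=1}^s x_{k,j}<\eta_{r+1}$, where $x_{k,j}$ is the $k$-th coordinate of $\mathbf{x}_j$. We write $\mathcal{X}\lhd\mathcal{Z}$ ($\mathcal{X}$ is included in $\mathcal{Z}$) if $(\mathbf{y}_{\mathcal{X}})_k\le(\mathbf{y}_{\mathcal{Z}})_k$ for all $k$. A code $\mathcal{C}$ is $[q;Q;\boldsymbol{\eta};u]$-SQ-disjunct if for all $1\le s,t\le u$ and all sets $\mathcal{X},\mathcal{Z}\subseteq\mathcal{C}$ with $|\mathcal{X}|=s$, $|\mathcal{Z}|=t$, $\mathcal{X}\lhd\mathcal{Z}$ implies $\mathcal{X}\subseteq\mathcal{Z}$. *)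

theory Defs
  imports Main
begin

text \<open>A binary n x N matrix is represented as a function M :: nat => nat => nat,
  M k j being the entry in row k < n and column j < N.\<close>

definition binary_matrix :: "nat \<Rightarrow> nat \<Rightarrow> (nat \<Rightarrow> nat \<Rightarrow> nat) \<Rightarrow> bool" where
  "binary_matrix n N M \<longleftrightarrow> (\<forall>k<n. \<forall>j<N. M k j \<in> {0, 1})"

definition u_disjunct :: "nat \<Rightarrow> nat \<Rightarrow> nat \<Rightarrow> (nat \<Rightarrow> nat \<Rightarrow> nat) \<Rightarrow> bool" where
  "u_disjunct u n N M \<longleftrightarrow>
     (\<forall>c<N. \<forall>S. S \<subseteq> {..<N} - {c} \<longrightarrow> card S \<le> u \<longrightarrow>
        (\<exists>k<n. M k c = 1 \<and> (\<forall>j\<in>S. M k j = 0)))"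

definition binary_disjunct_code_exists :: "nat \<Rightarrow> nat \<Rightarrow> nat \<Rightarrow> bool" where
  "binary_disjunct_code_exists u n N \<longleftrightarrow> (\<exists>M. binary_matrix n N M \<and> u_disjunct u n N M)"

definition scaled_column :: "nat \<Rightarrow> nat \<Rightarrow> (nat \<Rightarrow> nat \<Rightarrow> nat) \<Rightarrow> nat \<Rightarrow> nat list" where
  "scaled_column c n M j = map (\<lambda>k. c * M k j) [0..<n]"

definition qary_code :: "nat \<Rightarrow> nat \<Rightarrow> nat list set \<Rightarrow> bool" where
  "qary_code q n C \<longleftrightarrow> (\<forall>x\<in>C. length x = n \<and> (\<forall>i<n. x ! i < q))"

definition syndrome :: "nat \<Rightarrow> (nat \<Rightarrow> nat) \<Rightarrow> nat list set \<Rightarrow> nat \<Rightarrow> nat" where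
  "syndrome Q eta X k =
     (THE r. r < Q \<and> eta r \<le> (\<Sum>x\<in>X. x ! k) \<and> (\<Sum>x\<in>X. x ! k) < eta (Suc r))"

definition included :: "nat \<Rightarrow> (nat \<Rightarrow> nat) \<Rightarrow> nat \<Rightarrow> nat list set \<Rightarrow> nat list set \<Rightarrow> bool" where
  "included Q eta n X Z \<longleftrightarrow> (\<forall>k<n. syndrome Q eta X k \<le> syndrome Q eta Z k)"

definition SQ_disjunct :: "nat \<Rightarrow> nat \<Rightarrow> (nat \<Rightarrow> nat) \<Rightarrow> nat \<Rightarrow> nat \<Rightarrow> nat list set \<Rightarrow> bool" where
  "SQ_disjunct q Q eta u n C \<longleftrightarrow> qary_code q n C \<and>
     (\<forall>X Z. X \<subseteq> C \<longrightarrow> Z \<subseteq> C \<longrightarrow> 1 \<le> card X \<longrightarrow> card X \<le> u \<longrightarrow>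
        1 \<le> card Z \<longrightarrow> card Z \<le> u \<longrightarrow> included Q eta n X Z \<longrightarrow> X \<subseteq> Z)"

end

theory Submission
  imports Defs
begin

lemma eta_mono:
  assumes "\<forall>i<Q. (eta::nat\<Rightarrow>nat) i < eta (Suc i)"
  shows "i < j \<Longrightarrow> j \<le> Q \<Longrightarrow> eta (Suc i) \<le> eta j"
proof (induction j)
  case 0 then show ?case by simp
next
  case (Suc j)
  show ?case
  proof (cases "i = j")
    case True then show ?thesis by simp
  next
    case False
    then have "eta (Suc i) \<le> eta j" using Suc by simp
    moreover have "eta j < eta (Suc j)" using assms Suc.prems by simp
    ultimately show ?thesis by simp
  qed
qed

lemma eta_ex:
  assumes "\<forall>i<Q. (eta::nat\<Rightarrow>nat) i < eta (Suc i)" "eta 0 = 0"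
  shows "m \<le> Q \<Longrightarrow> s < eta m \<Longrightarrow> \<exists>r<m. eta r \<le> s \<and> s < eta (Suc r)"
proof (induction m)
  case 0 then show ?case using assms by simp
next
  case (Suc m)
  show ?case
  proof (cases "s < eta m")
    case True then show ?thesis using Suc by (metis Suc_leD less_SucI)
  next
    case False then show ?thesis using Suc.prems by (intro exI[of _ m]) simp
  qed
qed

lemma eta_ex1:
  assumes "\<forall>i<Q. (eta::nat\<Rightarrow>nat) i < eta (Suc i)" "eta 0 = 0" "s < eta Q"
  shows "\<exists>!r. r < Q \<and> eta r \<le> s \<and> s < eta (Suc r)"
proof -
  obtain r where r: "r<Q" "eta r \<le> s" "s < eta (Suc r)"
    using eta_ex[OF assms(1,2), of Q s] assms(3) by auto
  have "r' = r" if "r' < Q" "eta r' \<le> s" "s < eta (Suc r')" for r'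
  proof (rule ccontr)
    assume "r' \<noteq> r"
    then consider "r' < r" | "r < r'" by linarith
    then show False
    proof cases
      case 1 then have "eta (Suc r') \<le> eta r" using eta_mono[OF assms(1)] r by simp
      then show False using that r by simp
    next
      case 2 then have "eta (Suc r) \<le> eta r'" using eta_mono[OF assms(1)] that by simp
      then show False using that r by simp
    qed
  qed
  then show ?thesis using r by blast
qed

lemma synd_prop:
  assumes "\<forall>i<Q. (eta::nat\<Rightarrow>nat) i < eta (Suc i)" "eta 0 = 0" "(\<Sum>x\<in>X. x ! k) < eta Q"
  shows "syndrome Q eta X k < Q \<and> eta (syndrome Q eta X k) \<le> (\<Sum>x\<in>X. x ! k)
     \<and> (\<Sum>x\<in>X. x ! k) < eta (Suc (syndrome Q eta X k))"
  unfolding syndrome_def by (rule theI'[OF eta_ex1[OF assms]])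

theorem proposition2:
  fixes q u Q :: nat and eta :: "nat \<Rightarrow> nat"
  assumes "q \<ge> 2" and "u \<ge> 1" and "Q \<ge> 2"
    and "eta 0 = 0" and "\<forall>i<Q. eta i < eta (Suc i)"
    and "eta Q > (q - 1) * u" and "q - 1 \<ge> eta 1"
  shows "(\<forall>n N M. n \<ge> 1 \<longrightarrow> N \<ge> 1 \<longrightarrow> binary_matrix n N M \<longrightarrow> u_disjunct u n N M \<longrightarrow>
            (let C = scaled_column (q - 1) n M ` {..<N} in
              card C = N \<and> SQ_disjunct q Q eta u n C))
       \<and> (\<forall>n N. n \<ge> 1 \<longrightarrow> N \<ge> 1 \<longrightarrow> binary_disjunct_code_exists u n N \<longrightarrow>
            (\<exists>C. card C = N \<and> SQ_disjunct q Q eta u n C))"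
proof -
  have "eta 0 < eta (Suc 0)" using assms(5) assms(3) by simp
  then have eta1: "0 < eta 1" using assms(4) by simp
  have main: "let C = scaled_column (q - 1) n M ` {..<N} in card C = N \<and> SQ_disjunct q Q eta u n C"
    if bm: "binary_matrix n N M" and ud: "u_disjunct u n N M" for n N M
  proof -
    define f where "f = scaled_column (q - 1) n M"
    define C where "C = f ` {..<N}"
    have fk: "k < n \<Longrightarrow> f j ! k = (q - 1) * M k j" for j k
      unfolding f_def scaled_column_def by simp
    have inj: "inj_on f {..<N}"
    proof (rule inj_onI)
      fix a b assume ab: "a \<in> {..<N}" "b \<in> {..<N}" "f a = f b"
      show "a = b"
      proof (rule ccontr)
        assume "a \<noteq> b"
        then have "{b} \<subseteq> {..<N} - {a}" "card {b} \<le> u" using ab assms(2) by auto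
        then have "\<exists>k<n. M k a = 1 \<and> (\<forall>j\<in>{b}. M k j = 0)" using ud ab unfolding u_disjunct_def by blast
        then obtain k where k: "k<n" "M k a = 1" "M k b = 0" by auto
        have "f a ! k = f b ! k" using ab by simp
        then show False using k fk assms(1) by simp
      qed
    qed
    have cardC: "card C = N" unfolding C_def using card_image[OF inj] by simp
    have entry: "\<And>k j. k < n \<Longrightarrow> j < N \<Longrightarrow> M k j = 0 \<or> M k j = 1"
      using bm unfolding binary_matrix_def by auto
    have qary: "qary_code q n C"
      unfolding qary_code_def C_def
    proof
      fix x assume "x \<in> f ` {..<N}"
      then obtain j where j: "j<N" "x = f j" by auto
      show "length x = n \<and> (\<forall>i<n. x ! i < q)"
      proof
        show "length x = n" using j unfolding f_def scaled_column_def by simp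
        show "\<forall>i<n. x ! i < q"
        proof (intro allI impI)
          fix i assume "i<n"
          then show "x ! i < q" using j fk entry[of i j] assms(1) by auto
        qed
      qed
    qed
    have sq: "X \<subseteq> Z"
      if XC: "X \<subseteq> C" and ZC: "Z \<subseteq> C" and X1: "1 \<le> card X" and Xu: "card X \<le> u"
        and Z1: "1 \<le> card Z" and Zu: "card Z \<le> u" and inc: "included Q eta n X Z" for X Z
    proof (rule ccontr)
      assume "\<not> X \<subseteq> Z"
      then obtain x where x: "x \<in> X" "x \<notin> Z" by auto
      then obtain c where c: "c < N" "x = f c" using XC unfolding C_def by auto
      define S where "S = {j\<in>{..<N}. f j \<in> Z}"
      have fS: "f ` S = Z" using ZC unfolding S_def C_def by auto
      have "S \<subseteq> {..<N}" unfolding S_def by auto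
      then have "card S = card Z" using card_image[OF inj_on_subset[OF inj, of S]] fS by simp
      moreover have "S \<subseteq> {..<N} - {c}" using x c unfolding S_def by auto
      ultimately have "S \<subseteq> {..<N} - {c}" "card S \<le> u" using Zu by auto
      then have "\<exists>k<n. M k c = 1 \<and> (\<forall>j\<in>S. M k j = 0)" using ud c unfolding u_disjunct_def by blast
      then obtain k where k: "k<n" "M k c = 1" "\<forall>j\<in>S. M k j = 0" by blast
      have finX: "finite X" using X1 by (metis card.infinite not_one_le_zero)
      have sZ: "(\<Sum>z\<in>Z. z ! k) = 0"
      proof (rule sum.neutral, rule ballI)
        fix z assume "z \<in> Z"
        then obtain j where "j \<in> S" "z = f j" using fS by auto
        then show "z ! k = 0" using k fk by simp
      qed
      have xk: "x ! k = q - 1" using c k fk by simp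
      have lo: "q - 1 \<le> (\<Sum>y\<in>X. y ! k)"
        using member_le_sum[OF x(1), of "\<lambda>y. y ! k"] finX xk by simp
      have bnd: "\<forall>y\<in>X. y ! k \<le> q - 1"
      proof
        fix y assume "y \<in> X"
        then obtain j where "j<N" "y = f j" using XC unfolding C_def by auto
        then show "y ! k \<le> q - 1" using fk k entry[of k j] by auto
      qed
      have "(\<Sum>y\<in>X. y ! k) \<le> card X * (q - 1)" using sum_bounded_above[of X "\<lambda>y. y ! k" "q-1"] bnd by simp
      also have "\<dots> \<le> u * (q - 1)" using Xu by simp
      finally have hi: "(\<Sum>y\<in>X. y ! k) < eta Q" using assms(6) by (simp add: mult.commute)
      have Q0: "0 < eta Q" using hi by simp
      have "syndrome Q eta Z k = 0"
        unfolding syndrome_def sZ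
      proof (rule the_equality)
        show "0 < Q \<and> eta 0 \<le> 0 \<and> 0 < eta (Suc 0)" using eta1 assms(3,4) by simp
      next
        fix r assume "r < Q \<and> eta r \<le> 0 \<and> 0 < eta (Suc r)"
        then show "r = 0" using eta_mono[OF assms(5), of 0 r] eta1 by (cases "r = 0") auto
      qed
      moreover have "syndrome Q eta X k \<noteq> 0"
      proof
        assume "syndrome Q eta X k = 0"
        then have "(\<Sum>y\<in>X. y ! k) < eta 1" using synd_prop[OF assms(5,4) hi] by simp
        then show False using lo assms(7) by simp
      qed
      moreover have "syndrome Q eta X k \<le> syndrome Q eta Z k" using inc k(1) unfolding included_def by blast
      ultimately show False by simp
    qed
    show ?thesis unfolding Let_def C_def[symmetric] f_def[symmetric] SQ_disjunct_def
      using cardC qary sq by blast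
  qed
  show ?thesis
  proof (intro conjI allI impI)
    fix n N M assume "1 \<le> n" "1 \<le> N" "binary_matrix n N M" "u_disjunct u n N M"
    then show "let C = scaled_column (q - 1) n M ` {..<N} in card C = N \<and> SQ_disjunct q Q eta u n C"
      using main by blast
  next
    fix n N assume "1 \<le> n" "1 \<le> N" "binary_disjunct_code_exists u n N"
    then obtain M where "binary_matrix n N M" "u_disjunct u n N M"
      unfolding binary_disjunct_code_exists_def by auto
    then show "\<exists>C. card C = N \<and> SQ_disjunct q Q eta u n C" using main[of n N M] by (auto simp: Let_def)
  qed
qed

end
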